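(* An expanding map $\varphi:X\to X$ on a compact metrizable space $X$ is topologically free if and only if $X$ has no isolated points that are periodic for $\varphi$.
   Context: Expanding: there are a compatible metric $d$ and $\varepsilon>0,\theta>1$ with $d(\varphi x,\varphi y)\ge\theta d(x,y)$ whenever $d(x,y)<\varepsilon$. Topologically free: the set $\{x:\varphi^n(x)=x$ for some $n\ge1\}$ has empty interior. *)

theory Defs
  imports "HOL-Analysis.Analysis"
begin

definition expanding_map :: "'a topology \<Rightarrow> ('a \<Rightarrow> 'a) \<Rightarrow> bool" where
  "expanding_map X \<phi> \<longleftrightarrow>
     (\<exists>d. Metric_space (topspace X) d \<and> Metric_space.mtopology (topspace X) d = X \<and>
       (\<exists>\<epsilon>>0. \<exists>\<theta>>1. \<forall>x\<in>topspace X. \<forall>y\<in>topspace X.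
          d x y < \<epsilon> \<longrightarrow> d (\<phi> x) (\<phi> y) \<ge> \<theta> * d x y))"

definition periodic_point :: "('a \<Rightarrow> 'a) \<Rightarrow> 'a \<Rightarrow> bool" where
  "periodic_point \<phi> x \<longleftrightarrow> (\<exists>n\<ge>1. (\<phi> ^^ n) x = x)"

definition topologically_free :: "'a topology \<Rightarrow> ('a \<Rightarrow> 'a) \<Rightarrow> bool" where
  "topologically_free X \<phi> \<longleftrightarrow>
     X interior_of {x \<in> topspace X. periodic_point \<phi> x} = {}"

end

theory Submission
  imports Defs
begin

lemma cont_iter:
  assumes "continuous_map X X f"
  shows "continuous_map X X (f ^^ n)"
  by (induction n) (auto intro: continuous_map_compose[OF _ assms] simp del: comp_apply)

lemma iter_in:
  assumes "continuous_map X X f" "x \<in> topspace X"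
  shows "(f ^^ n) x \<in> topspace X"
  using cont_iter[OF assms(1)] assms(2) continuous_map_image_subset_topspace by blast

lemma expand_iter:
  assumes ms: "Metric_space M d" and inM: "\<And>j. (f ^^ j) x \<in> M" "\<And>j. (f ^^ j) y \<in> M"
    and exp: "\<forall>x\<in>M. \<forall>y\<in>M. d x y < e \<longrightarrow> d (f x) (f y) \<ge> t * d x y"
    and t: "t > 1"
    and small: "\<And>j. j < n \<Longrightarrow> d ((f ^^ j) x) ((f ^^ j) y) < e"
  shows "j \<le> n \<Longrightarrow> d ((f ^^ j) x) ((f ^^ j) y) \<ge> t ^ j * d x y"
proof (induction j)
  case 0 then show ?case by simp
next
  case (Suc j)
  then have IH: "d ((f ^^ j) x) ((f ^^ j) y) \<ge> t ^ j * d x y" by simp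
  have "d ((f ^^ Suc j) x) ((f ^^ Suc j) y) \<ge> t * d ((f ^^ j) x) ((f ^^ j) y)"
    using exp inM small[of j] Suc.prems by auto
  moreover have "t * d ((f ^^ j) x) ((f ^^ j) y) \<ge> t * (t ^ j * d x y)"
    using IH t by (simp add: mult_left_mono)
  ultimately show ?case by simp
qed

theorem mainTheorem19:
  fixes X :: "'a topology" and \<phi> :: "'a \<Rightarrow> 'a"
  assumes "compact_space X" and "metrizable_space X"
    and "continuous_map X X \<phi>"
    and "expanding_map X \<phi>"
  shows "topologically_free X \<phi> \<longleftrightarrow>
         \<not> (\<exists>x\<in>topspace X. openin X {x} \<and> periodic_point \<phi> x)"
proof
  assume tf: "topologically_free X \<phi>"
  show "\<not> (\<exists>x\<in>topspace X. openin X {x} \<and> periodic_point \<phi> x)"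
  proof
    assume "\<exists>x\<in>topspace X. openin X {x} \<and> periodic_point \<phi> x"
    then obtain x where x: "x \<in> topspace X" "openin X {x}" "periodic_point \<phi> x" by blast
    then have "{x} \<subseteq> X interior_of {x \<in> topspace X. periodic_point \<phi> x}"
      by (intro interior_of_maximal) auto
    with tf show False unfolding topologically_free_def by auto
  qed
next
  assume noiso: "\<not> (\<exists>x\<in>topspace X. openin X {x} \<and> periodic_point \<phi> x)"
  show "topologically_free X \<phi>"
  proof (rule ccontr)
    assume "\<not> topologically_free X \<phi>"
    then have ne: "X interior_of {x \<in> topspace X. periodic_point \<phi> x} \<noteq> {}"
      unfolding topologically_free_def by auto
    define F where "F n = {x \<in> topspace X. (\<phi> ^^ Suc n) x = id x}" for n
    have H: "Hausdorff_space X" using assms(2) metrizable_imp_Hausdorff_space by blast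
    have closedF: "closedin X (F n)" for n
      unfolding F_def
      by (rule closedin_continuous_maps_eq[OF H cont_iter[OF assms(3)]]) simp
    have cm: "completely_metrizable_space X"
      by (simp add: assms(1,2) compact_imp_locally_compact_space locally_compact_imp_completely_metrizable_space)
    have U: "\<Union>(range F) = {x \<in> topspace X. periodic_point \<phi> x}"
      unfolding periodic_point_def
    proof (intro equalityI subsetI)
      fix y assume "y \<in> \<Union>(range F)"
      then show "y \<in> {x \<in> topspace X. \<exists>n\<ge>1. (\<phi> ^^ n) x = x}"
        by (auto simp: F_def)
    next
      fix y assume "y \<in> {x \<in> topspace X. \<exists>n\<ge>1. (\<phi> ^^ n) x = x}"
      then obtain k where k: "y \<in> topspace X" "k \<ge> 1" "(\<phi> ^^ k) y = y" by auto
      then obtain m where "k = Suc m" by (cases k) auto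
      with k have "y \<in> F m" by (simp add: F_def del: funpow.simps)
      then show "y \<in> \<Union>(range F)" by blast
    qed
    have "\<exists>n. X interior_of F n \<noteq> {}"
    proof (rule ccontr)
      assume "\<not> (\<exists>n. X interior_of F n \<noteq> {})"
      then have "X interior_of \<Union>(range F) = {}"
        using closedF by (intro Baire_category_alt) (auto simp: cm)
      with U ne show False by simp
    qed
    then obtain n x where x: "x \<in> X interior_of F n" by blast
    define V where "V = X interior_of F n"
    have Vo: "openin X V" and VF: "V \<subseteq> F n" and xV: "x \<in> V"
      using x interior_of_subset[of X "F n"] by (auto simp: V_def)
    have xM: "x \<in> topspace X" using VF xV F_def by auto
    obtain d \<epsilon> \<theta> where ms: "Metric_space (topspace X) d"
      and mt: "Metric_space.mtopology (topspace X) d = X"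
      and e: "\<epsilon> > 0" and t: "\<theta> > 1"
      and exp: "\<forall>x\<in>topspace X. \<forall>y\<in>topspace X. d x y < \<epsilon> \<longrightarrow> d (\<phi> x) (\<phi> y) \<ge> \<theta> * d x y"
      using assms(4) unfolding expanding_map_def by blast
    interpret m: Metric_space "topspace X" d by (rule ms)
    define W where "W = V \<inter> (\<Inter>j\<in>{..n}. {y \<in> topspace X. (\<phi> ^^ j) y \<in> m.mball ((\<phi> ^^ j) x) \<epsilon>})"
    have Wo: "openin X W"
      unfolding W_def
    proof (intro openin_Int Vo openin_INT2)
      fix j
      show "openin X {y \<in> topspace X. (\<phi> ^^ j) y \<in> m.mball ((\<phi> ^^ j) x) \<epsilon>}"
        by (rule openin_continuous_map_preimage[OF cont_iter[OF assms(3)]]) (metis m.openin_mball mt)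
    qed auto
    have "W = {x}"
    proof
      show "{x} \<subseteq> W"
        unfolding W_def using xV xM iter_in[OF assms(3) xM] e by auto
      show "W \<subseteq> {x}"
      proof
        fix y assume y: "y \<in> W"
        then have yM: "y \<in> topspace X" and yV: "y \<in> V" unfolding W_def by auto
        have sm: "d ((\<phi> ^^ j) x) ((\<phi> ^^ j) y) < \<epsilon>" if "j < Suc n" for j
          using y that unfolding W_def by auto
        have "d ((\<phi> ^^ Suc n) x) ((\<phi> ^^ Suc n) y) \<ge> \<theta> ^ Suc n * d x y"
          by (rule expand_iter[OF ms, where n="Suc n"])
             (use iter_in[OF assms(3) xM] iter_in[OF assms(3) yM] exp t sm in auto)
        moreover have "(\<phi> ^^ Suc n) x = x" "(\<phi> ^^ Suc n) y = y"
          using VF xV yV by (auto simp: F_def)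
        ultimately have le: "\<theta> ^ Suc n * d x y \<le> d x y" by simp
        have g1: "\<theta> ^ Suc n > 1" using t by (meson one_less_power zero_less_Suc)
        have nn: "d x y \<ge> 0" using m.nonneg by blast
        have "(\<theta> ^ Suc n - 1) * d x y \<le> 0" using le by (simp add: algebra_simps)
        then have "d x y \<le> 0" using g1 by (simp add: mult_le_0_iff)
        then have "d x y = 0" using nn by linarith
        then show "y \<in> {x}" using xM yM by simp
      qed
    qed
    moreover have "periodic_point \<phi> x"
      using VF xV unfolding F_def periodic_point_def by (intro exI[of _ "Suc n"]) auto
    ultimately show False using noiso xM Wo by auto
  qed
qed

end
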